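(* For every $c\ge c_*=\frac2{\sqrt3}$, $2h_1(c)+h_2(c)>\pi$.
   Context: Let $K(R)=\frac{\exp(\frac{R^2-1}{2})}{R}$ for $R>0$ (strictly decreasing on $(0,1]$, strictly increasing on $[1,\infty)$, $K(1)=1$). For $s\ge1$ let $R^-(s)\in(0,1]$, $R^+(s)\in[1,\infty)$ be the solutions of $K(R)=s$. For $c\ge c_*$ define $h_1(c)=\int_{\pi/3}^{2\pi/3}\frac{d\psi}{1-[R^-(c\sin\psi)]^2}$ and $h_2(c)=\int_{R^-(\frac{\sqrt3}{2}c)}^{R^+(\frac{\sqrt3}{2}c)}\frac{K(R)\,dR}{R\sqrt{c^2-K(R)^2}}$. *)

theory Defs
  imports "HOL-Analysis.Analysis"
begin

definition K :: "real \<Rightarrow> real" where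
  "K R = exp ((R\<^sup>2 - 1) / 2) / R"

definition Rminus :: "real \<Rightarrow> real" where
  "Rminus s = (THE R. 0 < R \<and> R \<le> 1 \<and> K R = s)"

definition Rplus :: "real \<Rightarrow> real" where
  "Rplus s = (THE R. 1 \<le> R \<and> K R = s)"

definition c_star :: real where
  "c_star = 2 / sqrt 3"

definition h1 :: "real \<Rightarrow> real" where
  "h1 c = integral {pi/3 .. 2*pi/3} (\<lambda>\<psi>. 1 / (1 - (Rminus (c * sin \<psi>))\<^sup>2))"

definition h2 :: "real \<Rightarrow> real" where
  "h2 c = integral {Rminus (sqrt 3 / 2 * c) .. Rplus (sqrt 3 / 2 * c)}
            (\<lambda>R. K R / (R * sqrt (c\<^sup>2 - (K R)\<^sup>2)))"

end

theory Submission
  imports Defs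
begin


lemma K_pos: "R > 0 \<Longrightarrow> K R > 0"
  unfolding K_def by simp

lemma K_one: "K 1 = 1" unfolding K_def by simp

lemma K_ge_poly: assumes "R > 0" shows "K R \<ge> (1 + R\<^sup>2) / (2*R)"
proof -
  have "1 + (R\<^sup>2 - 1)/2 \<le> exp ((R\<^sup>2 - 1)/2)" by (rule exp_ge_add_one_self)
  hence "(1 + R\<^sup>2)/2 \<le> exp ((R\<^sup>2 - 1)/2)" by (simp add: field_simps)
  hence "(1 + R\<^sup>2)/2/R \<le> exp ((R\<^sup>2 - 1)/2) / R" using assms by (intro divide_right_mono) auto
  thus ?thesis unfolding K_def by simp
qed

lemma K_ge_one: assumes "R > 0" shows "K R \<ge> 1"
proof -
  have "0 \<le> (R-1)^2" by simp
  hence "2*R \<le> 1 + R\<^sup>2" by (simp add: power2_eq_square algebra_simps)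
  hence "(1 + R\<^sup>2) / (2*R) \<ge> 1" using assms by simp
  thus ?thesis using K_ge_poly[OF assms] by linarith
qed


lemma K_deriv: assumes "R > 0"
  shows "(K has_real_derivative (K R * (R - 1/R))) (at R)"
proof -
  have "((\<lambda>R. exp ((R\<^sup>2 - 1)/2) / R) has_real_derivative
     ((exp ((R\<^sup>2 - 1)/2) * (2*R/2)) * R - exp ((R\<^sup>2 - 1)/2) * 1) / (R*R)) (at R)"
    using assms by (auto intro!: derivative_eq_intros)
  moreover have "((exp ((R\<^sup>2 - 1)/2) * (2*R/2)) * R - exp ((R\<^sup>2 - 1)/2) * 1) / (R*R)
      = (exp ((R\<^sup>2 - 1)/2) / R) * (R - 1/R)" using assms by (simp add: divide_simps algebra_simps)
  ultimately show ?thesis unfolding K_def[abs_def] by simp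
qed

lemma K_cont: "continuous_on {0<..} K"
  unfolding K_def[abs_def] by (auto intro!: continuous_intros)

lemma K_cont2: "0 < a \<Longrightarrow> continuous_on {a..b} K"
  using K_cont by (rule continuous_on_subset) auto

lemma K_isCont: "R > 0 \<Longrightarrow> isCont K R"
  using K_deriv DERIV_isCont by blast

lemma K_strict_dec: assumes "0 < x" "x < y" "y \<le> 1" shows "K y < K x"
proof -
  have "(\<lambda>R. - K R) x < (\<lambda>R. - K R) y"
  proof (rule DERIV_pos_imp_increasing_open[of x y "\<lambda>R. - K R"])
    show "x < y" by fact
    show "continuous_on {x..y} (\<lambda>R. - K R)" using K_cont2[OF assms(1)] by (intro continuous_intros)
    fix z assume z: "x < z" "z < y"
    hence "z > 0" "z < 1" using assms by auto
    hence "((\<lambda>R. - K R) has_real_derivative - (K z * (z - 1/z))) (at z)"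
      using K_deriv by (auto intro!: derivative_eq_intros)
    moreover have "- (K z * (z - 1/z)) > 0"
    proof -
      have "z * z < 1" using \<open>z>0\<close> \<open>z<1\<close> using mult_strict_mono[of z 1 z 1] by simp 
      hence "z - 1/z < 0" using \<open>z>0\<close> by (simp add: field_simps)
      thus ?thesis using K_pos[OF \<open>z>0\<close>] by (simp add: mult_pos_neg)
    qed
    ultimately show "\<exists>y. ((\<lambda>R. - K R) has_real_derivative y) (at z) \<and> 0 < y" by blast
  qed
  thus ?thesis by simp
qed

lemma K_strict_inc: assumes "1 \<le> x" "x < y" shows "K x < K y"
proof (rule DERIV_pos_imp_increasing_open[of x y K])
  show "x < y" by fact
  show "continuous_on {x..y} K" using K_cont2 assms by simp
  fix z assume z: "x < z" "z < y"
  hence "z > 1" using assms by auto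
  hence "(K has_real_derivative (K z * (z - 1/z))) (at z)" using K_deriv by simp
  moreover have "K z * (z - 1/z) > 0"
  proof -
    have "1 < z * z" using \<open>z>1\<close> by (metis less_1_mult)
    hence "z - 1/z > 0" using \<open>z>1\<close> by (simp add: field_simps)
    thus ?thesis using K_pos \<open>z>1\<close> by simp
  qed
  ultimately show "\<exists>y. (K has_real_derivative y) (at z) \<and> 0 < y" by blast
qed



lemma K_inj_dec: "0 < x \<Longrightarrow> x \<le> 1 \<Longrightarrow> 0 < y \<Longrightarrow> y \<le> 1 \<Longrightarrow> K x = K y \<Longrightarrow> x = y"
  using K_strict_dec by (metis linorder_neqE_linordered_idom less_irrefl)

lemma K_inj_inc: "1 \<le> x \<Longrightarrow> 1 \<le> y \<Longrightarrow> K x = K y \<Longrightarrow> x = y"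
  using K_strict_inc by (metis linorder_neqE_linordered_idom less_irrefl)

lemma Rm_ex: assumes "s \<ge> 1" shows "\<exists>R. 0 < R \<and> R \<le> 1 \<and> K R = s"
proof -
  define rr where "rr = 1/(2 * s)"
  have rr: "0 < rr" "rr \<le> 1" using assms by (auto simp: rr_def field_simps)
  have "K rr \<ge> (1 + rr\<^sup>2)/(2*rr)" using K_ge_poly rr by simp
  moreover have "(1 + rr\<^sup>2)/(2*rr) \<ge> 1/(2*rr)" using rr by (intro divide_right_mono) auto
  moreover have "1/(2*rr) = s" using assms by (simp add: rr_def)
  ultimately have "s \<le> K rr" by linarith
  moreover have "K 1 \<le> s" using assms K_one by simp
  ultimately obtain x where "x \<ge> rr" "x \<le> 1" "K x = s"
  proof -
    have "\<forall>x. rr \<le> x \<and> x \<le> 1 \<longrightarrow> isCont K x" using K_isCont rr by auto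
    thus ?thesis using IVT2[of K 1 s rr] \<open>s \<le> K rr\<close> \<open>K 1 \<le> s\<close> rr that by blast
  qed
  thus ?thesis using rr by (intro exI[of _ x]) auto
qed

lemma Rp_ex: assumes "s \<ge> 1" shows "\<exists>R. 1 \<le> R \<and> K R = s"
proof -
  define rr where "rr = 2 * s"
  have rr: "0 < rr" "1 \<le> rr" using assms by (auto simp: rr_def)
  have "K rr \<ge> (1 + rr\<^sup>2)/(2*rr)" using K_ge_poly rr by simp
  moreover have "(1 + rr\<^sup>2)/(2*rr) \<ge> rr\<^sup>2/(2*rr)" using rr by (intro divide_right_mono) auto
  moreover have "rr\<^sup>2/(2*rr) = s" using assms by (simp add: rr_def power2_eq_square)
  ultimately have "s \<le> K rr" by linarith
  moreover have "K 1 \<le> s" using assms K_one by simp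
  ultimately obtain x where "x \<ge> 1" "x \<le> rr" "K x = s"
    using IVT'[of K 1 s rr] K_cont2[of 1 rr] rr by auto
  thus ?thesis by auto
qed

lemma Rm_props: assumes "s \<ge> 1" shows "0 < Rminus s" "Rminus s \<le> 1" "K (Rminus s) = s"
proof -
  have "\<exists>!R. 0 < R \<and> R \<le> 1 \<and> K R = s"
    using Rm_ex[OF assms] K_inj_dec by blast
  from theI'[OF this] show "0 < Rminus s" "Rminus s \<le> 1" "K (Rminus s) = s"
    unfolding Rminus_def by auto
qed

lemma Rp_props: assumes "s \<ge> 1" shows "1 \<le> Rplus s" "K (Rplus s) = s"
proof -
  have "\<exists>!R. 1 \<le> R \<and> K R = s"
    using Rp_ex[OF assms] K_inj_inc by blast
  from theI'[OF this] show "1 \<le> Rplus s" "K (Rplus s) = s"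
    unfolding Rplus_def by auto
qed

lemma Rm_eq: "0 < rr \<Longrightarrow> rr \<le> 1 \<Longrightarrow> Rminus (K rr) = rr"
  using Rm_props[of "K rr"] K_ge_one[of rr] K_inj_dec by metis

lemma Rm_one: "Rminus 1 = 1" using Rm_eq[of 1] K_one by simp
lemma Rp_one: "Rplus 1 = 1" using Rp_props[of 1] K_one K_inj_inc[of "Rplus 1" 1] by simp

lemma Rm_le: assumes "s \<ge> 1" "0 < rr" "rr \<le> 1" "K rr \<le> s" shows "Rminus s \<le> rr"
proof (rule ccontr)
  assume "\<not> Rminus s \<le> rr"
  hence "K (Rminus s) < K rr" using K_strict_dec[of rr "Rminus s"] Rm_props[OF assms(1)] assms by auto
  thus False using Rm_props[OF assms(1)] assms by simp
qed

lemma Rm_ge: assumes "s \<ge> 1" "0 < rr" "rr \<le> 1" "s \<le> K rr" shows "rr \<le> Rminus s"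
proof (rule ccontr)
  assume "\<not> rr \<le> Rminus s"
  hence "K rr < K (Rminus s)" using K_strict_dec[of "Rminus s" rr] Rm_props[OF assms(1)] assms by auto
  thus False using Rm_props[OF assms(1)] assms by simp
qed

lemma Rm_gt: assumes "s \<ge> 1" "0 < rr" "rr \<le> 1" "s < K rr" shows "rr < Rminus s"
proof (rule ccontr)
  assume "\<not> rr < Rminus s"
  hence "K (Rminus s) \<ge> K rr" using K_strict_dec[of "Rminus s" rr] Rm_props[OF assms(1)] assms
    by (cases "rr = Rminus s") auto
  thus False using Rm_props[OF assms(1)] assms by simp
qed

lemma Rp_ge: assumes "s \<ge> 1" "1 \<le> rr" "K rr \<le> s" shows "rr \<le> Rplus s"
proof (rule ccontr)
  assume "\<not> rr \<le> Rplus s"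
  hence "K (Rplus s) < K rr" using K_strict_inc[of "Rplus s" rr] Rp_props[OF assms(1)] assms by auto
  thus False using Rp_props[OF assms(1)] assms by simp
qed

lemma Rm_less1: assumes "s > 1" shows "Rminus s < 1"
  using Rm_props[of s] assms K_one by (metis less_eq_real_def less_irrefl)

lemma Rp_gt1: assumes "s > 1" shows "Rplus s > 1"
  using Rp_props[of s] assms K_one by (metis less_eq_real_def less_irrefl)

lemma Rm_mono: assumes "1 \<le> s" "s \<le> t" shows "Rminus t \<le> Rminus s"
  using Rm_le[of t "Rminus s"] Rm_props[OF assms(1)] assms by auto

lemma Rm_isCont: assumes "s > 1" shows "isCont Rminus s"
proof -
  define R0 where "R0 = Rminus s"
  have R0: "0 < R0" "R0 < 1" "K R0 = s" using Rm_props[of s] Rm_less1[of s] assms by (auto simp: R0_def)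
  define d where "d = min (R0/2) ((1-R0)/2)"
  have d: "d > 0" using R0 by (simp add: d_def)
  have "isCont Rminus (K R0)"
  proof (rule isCont_inverse_function[where f=K and x=R0, OF d])
    fix z assume "\<bar>z - R0\<bar> \<le> d"
    moreover have "d \<le> R0/2" "d \<le> (1-R0)/2" by (auto simp: d_def min_def)
    ultimately have z: "0 < z" "z \<le> 1" using R0 by (auto simp: abs_le_iff)
    show "Rminus (K z) = z" using Rm_eq[OF z] .
    show "isCont K z" using K_isCont z by simp
  qed
  thus ?thesis using R0 by simp
qed



lemma c_star_gt1: "c_star > 1"
proof -
  have "sqrt 3 < sqrt (2^2)" by (subst real_sqrt_less_iff) simp
  hence "sqrt 3 < 2" by simp
  thus ?thesis unfolding c_star_def by simp
qed

lemma sqrt3_c_star: "sqrt 3 / 2 * c_star = 1"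
  unfolding c_star_def by simp

lemma arcsin_sqrt3_half: "arcsin (sqrt 3 / 2) = pi/3"
  using arcsin_sin[of "pi/3"] sin_60 by simp

definition Jp :: "real \<Rightarrow> real \<Rightarrow> real" where
  "Jp u v = 2/3 - (u + u^3/3)/2 + (v - 1/v)/2"

lemma K_le_between:
  assumes "s \<ge> 1" "Rminus s \<le> R" "R \<le> Rplus s"
  shows "K R \<le> s"
proof (cases "R \<le> 1")
  case True
  have "0 < Rminus s" "K (Rminus s) = s" using Rm_props assms by auto
  thus ?thesis using K_strict_dec[of "Rminus s" R] True assms(2)
    by (cases "R = Rminus s") auto
next
  case False
  have "K (Rplus s) = s" using Rp_props assms by auto
  thus ?thesis using K_strict_inc[of R "Rplus s"] False assms(3)
    by (cases "R = Rplus s") auto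
qed

lemma deriv_phi:
  assumes "R > 0" "c > 0" "K R < c"
  shows "((\<lambda>R. arcsin (K R / c)) has_real_derivative (K R * (R - 1/R) / sqrt (c\<^sup>2 - (K R)\<^sup>2))) (at R)"
proof -
  have KR: "0 < K R" using K_pos assms by simp
  have x: "-1 < K R / c" "K R / c < 1" using KR assms by (auto simp: field_simps)
  have "((\<lambda>R. arcsin (K R / c)) has_real_derivative
      (inverse (sqrt (1 - (K R / c)\<^sup>2)) * (K R * (R - 1/R) / c))) (at R)"
    using DERIV_arcsin[OF x] K_deriv[OF assms(1)] x assms
    by (auto intro!: derivative_eq_intros DERIV_chain2[where f=arcsin])
  moreover have "sqrt (1 - (K R / c)\<^sup>2) = sqrt (c\<^sup>2 - (K R)\<^sup>2) / c"
  proof -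
    have "1 - (K R / c)\<^sup>2 = (c\<^sup>2 - (K R)\<^sup>2) / c\<^sup>2" using assms by (simp add: field_simps power2_eq_square)
    thus ?thesis using assms by (simp add: real_sqrt_divide)
  qed
  moreover have "c\<^sup>2 - (K R)\<^sup>2 > 0" using assms KR
    by (simp add: power2_eq_square) (smt (verit) mult_strict_mono)
  ultimately show ?thesis using assms by (simp add: field_simps)
qed

lemma KR_ge: assumes "R > 0" shows "K R * R \<ge> (1 + R\<^sup>2)/2"
proof -
  have "K R * R = exp ((R\<^sup>2 - 1)/2)" using assms unfolding K_def by simp
  moreover have "1 + (R\<^sup>2 - 1)/2 \<le> exp ((R\<^sup>2 - 1)/2)" by (rule exp_ge_add_one_self)
  ultimately show ?thesis by (simp add: field_simps)
qed

lemma h2_lower: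
  assumes "c > c_star"
  shows "h2 c \<ge> pi/3 - arcsin (1/c) + Jp (Rminus (sqrt 3 / 2 * c)) (Rplus (sqrt 3 / 2 * c)) / sqrt (c\<^sup>2 - 1)"
proof -
  define S where "S = sqrt 3 / 2 * c"
  define u where "u = Rminus S"
  define v where "v = Rplus S"
  define g where "g R = K R / (R * sqrt (c\<^sup>2 - (K R)\<^sup>2))" for R
  define sq1 where "sq1 = sqrt (c\<^sup>2 - 1)"
  have c1: "c > 1" using assms c_star_gt1 by simp
  have S1: "S > 1"
  proof -
    have "sqrt 3 / 2 * c > sqrt 3 / 2 * c_star" using assms by (intro mult_strict_left_mono) auto
    hence "sqrt 3 / 2 * c > 1" using sqrt3_c_star by linarith
    thus ?thesis by (simp add: S_def)
  qed
  have s3: "sqrt 3 / 2 < 1"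
  proof -
    have "sqrt 3 < sqrt (2^2)" by (subst real_sqrt_less_iff) simp
    thus ?thesis by simp
  qed
  have Sc: "S < c" using s3 c1 by (simp add: S_def)
  have Sc': "S / c = sqrt 3 / 2" using c1 by (simp add: S_def)
  have u: "0 < u" "u < 1" "K u = S" using Rm_props[of S] Rm_less1[of S] S1 by (auto simp: u_def)
  have v: "1 < v" "K v = S" using Rp_props[of S] Rp_gt1[of S] S1 by (auto simp: v_def)
  have sq1: "sq1 > 0" using c1 by (simp add: sq1_def)
  have KS: "K R \<le> S" if "R \<in> {u..v}" for R
    using K_le_between[of S R] that S1 by (auto simp: u_def v_def)
  have Kc: "K R < c" if "R \<in> {u..v}" for R using KS[OF that] Sc by simp
  have Rpos: "R > 0" if "R \<in> {u..v}" for R using that u by auto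
  have dpos: "c\<^sup>2 - (K R)\<^sup>2 > 0" if "R \<in> {u..v}" for R
  proof -
    have "0 < K R" using K_pos Rpos[OF that] by simp
    hence "K R * K R < c * c" using Kc[OF that] by (simp add: mult_strict_mono)
    thus ?thesis by (simp add: power2_eq_square)
  qed
  have sqle: "sqrt (c\<^sup>2 - (K R)\<^sup>2) \<le> sq1" if "R \<in> {u..v}" for R
  proof -
    have "1 \<le> K R" using K_ge_one Rpos[OF that] by simp
    hence "1 \<le> (K R)\<^sup>2" by simp
    thus ?thesis unfolding sq1_def by simp
  qed
  have nz: "R * sqrt (c\<^sup>2 - (K R)\<^sup>2) \<noteq> 0" if "R \<in> {u..v}" for R
    using dpos[OF that] Rpos[OF that] by simp
  have cont: "continuous_on {u..v} g"
    unfolding g_def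
    by (intro continuous_intros K_cont2[OF u(1)]) (use nz in blast)+
  hence int: "g integrable_on {u..v}" by (rule integrable_continuous_interval)
  have split: "integral {u..1} g + integral {1..v} g = integral {u..v} g"
    using Henstock_Kurzweil_Integration.integral_combine[where a=u and c=1 and b=v and f=g] int u v by simp
  have intA: "g integrable_on {u..1}" using integrable_subinterval_real[OF int] u v by simp
  have intB: "g integrable_on {1..v}" using integrable_subinterval_real[OF int] u v by simp
  define L1 where "L1 R = - arcsin (K R / c) + (R + R^3/3)/(2* sq1)" for R
  define l1 where "l1 R = - (K R * (R - 1/R) / sqrt (c\<^sup>2 - (K R)\<^sup>2)) + (1 + R\<^sup>2)/(2* sq1)" for R
  have dL1: "(L1 has_real_derivative l1 R) (at R)" if "R \<in> {u..v}" for R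
  proof -
    have "((\<lambda>R. (R + R^3/3)/(2* sq1)) has_real_derivative (1 + R\<^sup>2)/(2* sq1)) (at R)"
      using sq1 by (auto intro!: derivative_eq_intros simp: field_simps power2_eq_square)
    from DERIV_add[OF DERIV_minus[OF deriv_phi[OF Rpos[OF that] _ Kc[OF that]]] this]
    show ?thesis using c1 unfolding L1_def[abs_def] l1_def by simp
  qed
  have A1: "(l1 has_integral (L1 1 - L1 u)) {u..1}"
  proof (rule fundamental_theorem_of_calculus)
    show "u \<le> 1" using u by simp
    fix x assume "x \<in> {u..1}"
    hence "x \<in> {u..v}" using v by auto
    from dL1[OF this] show "(L1 has_vector_derivative l1 x) (at x within {u..1})"
      by (simp add: has_real_derivative_iff_has_vector_derivative[symmetric] has_field_derivative_at_within)
  qed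
  have A2: "l1 R \<le> g R" if "R \<in> {u..1}" for R
  proof -
    have R: "R \<in> {u..v}" using that v by auto
    define sq where "sq = sqrt (c\<^sup>2 - (K R)\<^sup>2)"
    have sq: "sq > 0" "sq \<le> sq1" using dpos[OF R] sqle[OF R] by (auto simp: sq_def)
    have R0: "R > 0" using Rpos[OF R] .
    have "g R - (- (K R * (R - 1/R) / sq)) = K R * R / sq"
      using R0 sq unfolding g_def sq_def[symmetric] by (simp add: field_simps)
    moreover have "K R * R / sq \<ge> K R * R / sq1"
      using sq K_pos[OF R0] R0 by (intro divide_left_mono) auto
    moreover have "K R * R / sq1 \<ge> (1 + R\<^sup>2)/2/sq1"
      using KR_ge[OF R0] sq1 by (intro divide_right_mono) auto
    moreover have "(1 + R\<^sup>2)/2/sq1 = (1 + R\<^sup>2)/(2 * sq1)" by simp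
    ultimately show ?thesis unfolding l1_def sq_def[symmetric] by argo
  qed
  have A: "integral {u..1} g \<ge> L1 1 - L1 u"
    using has_integral_le[OF A1 integrable_integral[OF intA]] A2 by auto
  define L2 where "L2 R = (R - 1/R)/(2* sq1)" for R
  define l2 where "l2 R = (1 + 1/R\<^sup>2)/(2* sq1)" for R
  have B1: "(l2 has_integral (L2 v - L2 1)) {1..v}"
  proof (rule fundamental_theorem_of_calculus)
    show "1 \<le> v" using v by simp
    fix x assume "x \<in> {1..v}"
    hence x0: "x > 0" by auto
    have "(L2 has_real_derivative l2 x) (at x)"
      unfolding L2_def[abs_def] l2_def using x0 sq1
      by (auto intro!: derivative_eq_intros simp: field_simps power2_eq_square)
    thus "(L2 has_vector_derivative l2 x) (at x within {1..v})"
      by (simp add: has_real_derivative_iff_has_vector_derivative[symmetric] has_field_derivative_at_within)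
  qed
  have B2: "l2 R \<le> g R" if "R \<in> {1..v}" for R
  proof -
    have R: "R \<in> {u..v}" using that u by auto
    define sq where "sq = sqrt (c\<^sup>2 - (K R)\<^sup>2)"
    have sq: "sq > 0" "sq \<le> sq1" using dpos[OF R] sqle[OF R] by (auto simp: sq_def)
    have R0: "R > 0" using Rpos[OF R] .
    have "g R = K R * R / (R\<^sup>2 * sq)"
      using R0 sq unfolding g_def sq_def[symmetric] by (simp add: field_simps power2_eq_square)
    moreover have "K R * R / (R\<^sup>2 * sq) \<ge> K R * R / (R\<^sup>2 * sq1)"
      using sq K_pos[OF R0] R0 by (intro divide_left_mono mult_left_mono mult_pos_pos) auto
    moreover have "K R * R / (R\<^sup>2 * sq1) \<ge> (1 + R\<^sup>2)/2/(R\<^sup>2 * sq1)"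
      using KR_ge[OF R0] sq1 R0 by (intro divide_right_mono) auto
    moreover have "(1 + R\<^sup>2)/2/(R\<^sup>2 * sq1) = l2 R"
      unfolding l2_def using R0 by (simp add: field_simps)
    ultimately show ?thesis by simp
  qed
  have B: "integral {1..v} g \<ge> L2 v - L2 1"
    using has_integral_le[OF B1 integrable_integral[OF intB]] B2 by auto
  have "arcsin (K u / c) = pi/3" using u(3) arcsin_sqrt3_half by (simp only: Sc')
  hence "L1 1 - L1 u + (L2 v - L2 1) = pi/3 - arcsin (1/c) + Jp u v / sq1"
    unfolding L1_def L2_def Jp_def using K_one sq1 by (simp add: field_simps)
  moreover have "h2 c = integral {u..v} g"
    unfolding h2_def g_def u_def v_def S_def by simp
  ultimately show ?thesis using A B split unfolding u_def v_def S_def sq1_def by linarith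
qed



lemma sin_ge_half: assumes "0 \<le> z" "z \<le> pi/3" shows "z/2 \<le> sin z"
proof -
  have "(\<lambda>z. sin z - z/2) 0 \<le> (\<lambda>z. sin z - z/2) z"
  proof (rule DERIV_nonneg_imp_increasing_open[of 0 z])
    show "0 \<le> z" by fact
    show "continuous_on {0..z} (\<lambda>z. sin z - z/2)" by (intro continuous_intros) auto
    fix x assume x: "0 < x" "x < z"
    have "cos x \<ge> cos (pi/3)" using x assms by (intro cos_monotone_0_pi_le) auto
    hence "cos x - 1/2 \<ge> 0" using cos_60 by simp
    moreover have "((\<lambda>z. sin z - z/2) has_real_derivative (cos x - 1/2)) (at x)"
      by (auto intro!: derivative_eq_intros)
    ultimately show "\<exists>y. ((\<lambda>z. sin z - z/2) has_real_derivative y) (at x) \<and> 0 \<le> y" by blast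
  qed
  thus ?thesis by simp
qed

lemma sin_gap:
  assumes "pi/3 \<le> x" "x \<le> 2*pi/3"
  shows "sin x - sqrt 3/2 \<ge> (x - pi/3) * (2*pi/3 - x) / 8"
proof -
  have "sin x - sqrt 3/2 = 2 * sin ((x - pi/3)/2) * cos ((x + pi/3)/2)"
    using sin_diff_sin[of x "pi/3"] sin_60 by simp
  moreover have "cos ((x + pi/3)/2) = sin ((2*pi/3 - x)/2)"
    by (simp add: cos_sin_eq field_simps)
  moreover have "sin ((x - pi/3)/2) \<ge> (x - pi/3)/4"
    using sin_ge_half[of "(x - pi/3)/2"] assms by auto
  moreover have "sin ((2*pi/3 - x)/2) \<ge> (2*pi/3 - x)/4"
    using sin_ge_half[of "(2*pi/3 - x)/2"] assms by auto
  moreover have "(x - pi/3)/4 \<ge> 0" "(2*pi/3 - x)/4 \<ge> 0" using assms by auto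
  ultimately have "((x - pi/3)/4) * ((2*pi/3 - x)/4) \<le> sin ((x - pi/3)/2) * sin ((2*pi/3 - x)/2)"
    by (intro mult_mono) auto
  moreover have "sin x - sqrt 3/2 = 2 * (sin ((x - pi/3)/2) * sin ((2*pi/3 - x)/2))"
    using \<open>sin x - sqrt 3/2 = _\<close> \<open>cos ((x + pi/3)/2) = _\<close> by simp
  ultimately show ?thesis by simp
qed

lemma sin_ge_sqrt3: assumes "pi/3 \<le> x" "x \<le> 2*pi/3" shows "sin x \<ge> sqrt 3/2"
proof -
  have "(x - pi/3) * (2*pi/3 - x) / 8 \<ge> 0" using assms by simp
  thus ?thesis using sin_gap[OF assms] by simp
qed

lemma sin_gt_sqrt3: assumes "pi/3 < x" "x < 2*pi/3" shows "sin x > sqrt 3/2"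
proof -
  have "(x - pi/3) * (2*pi/3 - x) / 8 > 0" using assms by simp
  moreover have "sin x - sqrt 3/2 \<ge> (x - pi/3) * (2*pi/3 - x) / 8" using sin_gap[of x] assms by simp
  ultimately show ?thesis by linarith
qed

lemma exp_ub: assumes "0 \<le> y" "y \<le> real n" "n > 0"
  shows "exp y \<le> (1 + y/n + (y/n)\<^sup>2)^n"
proof -
  have "exp y = exp (y/n)^n" using exp_of_nat_mult[of n "y/n"] assms by simp
  also have "\<dots> \<le> (1 + y/n + (y/n)\<^sup>2)^n"
    using exp_bound[of "y/n"] assms by (intro power_mono) (auto simp: field_simps)
  finally show ?thesis .
qed

lemma exp_lb: assumes "0 \<le> y" "n > 0"
  shows "(1 + y/n + (y/n)\<^sup>2/2)^n \<le> exp y"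
proof -
  have "(1 + y/n + (y/n)\<^sup>2/2)^n \<le> exp (y/n)^n"
    using exp_lower_Taylor_quadratic[of "y/n"] assms by (intro power_mono) auto
  also have "\<dots> = exp y" using exp_of_nat_mult[of n "y/n"] assms by simp
  finally show ?thesis .
qed



lemma K_ge_cert:
  assumes "0 < r" "r < 1" "1 + ((1 - r\<^sup>2)/2)/16 + (((1 - r\<^sup>2)/2)/16)\<^sup>2 \<le> b"
    "b^16 * q * r \<le> 1" "0 < q"
  shows "q \<le> K r"
proof -
  define y where "y = (1 - r\<^sup>2)/2"
  have r2: "0 \<le> r\<^sup>2" "r\<^sup>2 \<le> 1" using assms(1,2) by (auto simp: power_le_one)
  have y0: "0 \<le> y" using r2 unfolding y_def by simp
  have "y \<le> 1/2" unfolding y_def by simp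
  hence y16: "y \<le> 16" by linarith
  note y = y0 y16
  have "exp y \<le> (1 + y/16 + (y/16)\<^sup>2)^16" using exp_ub[of y 16] y by simp
  also have "\<dots> \<le> b^16" using assms(3) y unfolding y_def[symmetric]
    by (intro power_mono) (auto simp: add_nonneg_nonneg)
  finally have e: "exp y \<le> b^16" .
  have "(r\<^sup>2 - 1)/2 = - y" unfolding y_def by (simp add: minus_divide_left)
  hence "K r = exp (- y) / r" unfolding K_def by simp
  hence k: "K r = 1 / (exp y * r)" by (simp add: exp_minus field_simps)
  have "exp y * r \<le> b^16 * r" using e assms(1) by simp
  hence "q * (exp y * r) \<le> q * (b^16 * r)" using assms(5) by (intro mult_left_mono) auto
  also have "\<dots> \<le> 1" using assms(4) by (simp add: ac_simps)
  finally have m: "q * (exp y * r) \<le> 1" .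
  have X: "exp y * r > 0" using assms(1) by simp
  show ?thesis unfolding k using X m by (subst le_divide_eq) simp
qed

lemma K_le_cert_lt1:
  assumes "0 < r" "r \<le> 1" "0 \<le> a" "a \<le> 1 + ((1 - r\<^sup>2)/2)/16 + (((1 - r\<^sup>2)/2)/16)\<^sup>2/2"
    "1 \<le> a^16 * q * r"
  shows "K r \<le> q"
proof -
  define y where "y = (1 - r\<^sup>2)/2"
  have r2: "0 \<le> r\<^sup>2" "r\<^sup>2 \<le> 1" using assms(1,2) by (auto simp: power_le_one)
  have y: "0 \<le> y" using r2 unfolding y_def by simp
  have "a^16 \<le> (1 + y/16 + (y/16)\<^sup>2/2)^16" using assms(3,4) unfolding y_def[symmetric]
    by (intro power_mono) auto
  also have "\<dots> \<le> exp y" using exp_lb[of y 16] y by simp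
  finally have e: "a^16 \<le> exp y" .
  have "(r\<^sup>2 - 1)/2 = - y" unfolding y_def by (simp add: minus_divide_left)
  hence "K r = exp (- y) / r" unfolding K_def by simp
  hence k: "K r = 1 / (exp y * r)" by (simp add: exp_minus field_simps)
  have m0: "1 \<le> exp y * q * r"
  proof -
    have a16: "0 \<le> a^16" using assms(3) by simp
    have qr: "0 < q*r"
    proof (rule ccontr)
      assume "\<not> 0 < q*r"
      hence "a^16 * (q*r) \<le> 0" using a16 by (simp add: mult_nonneg_nonpos)
      thus False using assms(5) by (simp add: mult.assoc)
    qed
    have "a^16*(q*r) \<le> exp y * (q*r)" using e qr by (simp add: mult_right_mono)
    thus ?thesis using assms(5) by (simp add: mult.assoc)
  qed
  have X: "exp y * r > 0" using assms(1) by simp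
  have m: "1 \<le> q * (exp y * r)" using m0 by (simp add: ac_simps)
  show ?thesis unfolding k using X m by (subst divide_le_eq) simp
qed

lemma K_le_cert_gt1:
  assumes "1 \<le> r" "(r\<^sup>2 - 1)/2 \<le> 16" "1 + ((r\<^sup>2 - 1)/2)/16 + (((r\<^sup>2 - 1)/2)/16)\<^sup>2 \<le> b"
    "b^16 \<le> q * r"
  shows "K r \<le> q"
proof -
  define x where "x = (r\<^sup>2 - 1)/2"
  have x: "0 \<le> x" "x \<le> 16" using assms(1,2) by (auto simp: x_def one_le_power)
  have "exp x \<le> (1 + x/16 + (x/16)\<^sup>2)^16" using exp_ub[of x 16] x by simp
  also have "\<dots> \<le> b^16" using assms(3) x unfolding x_def[symmetric]
    by (intro power_mono) (auto simp: add_nonneg_nonneg)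
  finally have "exp x \<le> q * r" using assms(4) by simp
  thus ?thesis unfolding K_def x_def[symmetric] using assms(1) by (simp add: field_simps)
qed

lemma sqrt3_lb: "1732/1000 \<le> sqrt 3"
  by (rule real_le_rsqrt) (simp add: power_divide)



abbreviation Eterm :: "real \<Rightarrow> real" where
  "Eterm c \<equiv> 2*pi/3 * ((Rminus c)\<^sup>2 / (1 - (Rminus c)\<^sup>2)) * sqrt (c\<^sup>2 - 1)"

abbreviation Jterm :: "real \<Rightarrow> real" where
  "Jterm c \<equiv> Jp (Rminus (sqrt 3 / 2 * c)) (Rplus (sqrt 3 / 2 * c))"

lemma Jp_mono:
  assumes "0 \<le> u" "u \<le> u'" "0 < v'" "v' \<le> v"
  shows "Jp u' v' \<le> Jp u v"
proof -
  have a: "u^3 \<le> u'^3" using assms by (intro power_mono) auto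
  have b: "1/v \<le> 1/v'" using assms by (intro divide_left_mono) auto
  have c: "u + u^3/3 \<le> u' + u'^3/3" using a assms(2) by (intro add_mono divide_right_mono) auto
  have d: "v' - 1/v' \<le> v - 1/v" using b assms(4) by (intro diff_mono) auto
  have e: "(u + u^3/3)/2 \<le> (u' + u'^3/3)/2" using c by simp
  have f: "(v' - 1/v')/2 \<le> (v - 1/v)/2" using d by simp
  show ?thesis unfolding Jp_def by (rule add_mono[OF diff_mono[OF order_refl e] f])
qed

lemma J_part:
  assumes "c0 \<le> c" "1 < c0" "0 < u'" "u' \<le> 1" "K u' \<le> 1732/1000/2 * c0"
    "1 \<le> v'" "K v' \<le> 1732/1000/2 * c0"
  shows "Jp u' v' \<le> Jterm c"
proof -
  define S where "S = sqrt 3 / 2 * c"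
  have "1732/1000/2 * c0 \<le> sqrt 3 / 2 * c"
    using sqrt3_lb assms(1,2) by (intro mult_mono) auto
  hence S: "1732/1000/2 * c0 \<le> S" by (simp add: S_def)
  have S1: "1 \<le> S" using S assms(2,3,4,5) K_ge_one[of u'] by linarith
  have "Rminus S \<le> u'" using Rm_le[OF S1 assms(3,4)] assms(5) S by simp
  moreover have "v' \<le> Rplus S" using Rp_ge[OF S1 assms(6)] assms(7) S by simp
  moreover have "0 < Rminus S" using Rm_props S1 by simp
  ultimately show ?thesis unfolding S_def[symmetric] using assms(6)
    by (intro Jp_mono) auto
qed

lemma E_part:
  assumes "c0 \<le> c" "c \<le> c1" "1 < c0" "0 < w'" "w' < 1" "c1 \<le> K w'" "0 \<le> q" "q\<^sup>2 \<le> c0\<^sup>2 - 1"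
  shows "2*(314/100)/3 * (w'\<^sup>2/(1-w'\<^sup>2)) * q \<le> Eterm c"
proof -
  define w where "w = Rminus c"
  have c1: "1 \<le> c" using assms by simp
  have w: "w' \<le> w" using Rm_ge[OF c1 assms(4)] assms unfolding w_def by simp
  have w1: "w < 1" using Rm_less1[of c] assms unfolding w_def by simp
  have "w'\<^sup>2 \<le> w\<^sup>2" using w assms(4) by (intro power_mono) auto
  moreover have "w\<^sup>2 < 1" using w1 w assms(4) by (simp add: power_less_one_iff abs_less_iff)
  ultimately have E: "w'\<^sup>2/(1-w'\<^sup>2) \<le> w\<^sup>2/(1-w\<^sup>2)"
    by (intro frac_le) auto
  have cc: "c0\<^sup>2 \<le> c\<^sup>2" using assms by (intro power_mono) auto
  have "q\<^sup>2 \<le> c\<^sup>2 - 1" using cc assms(8) by linarith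
  hence q: "q \<le> sqrt (c\<^sup>2 - 1)" by (rule real_le_rsqrt)
  have pi: "314/100 \<le> pi" using pi_approx by simp
  have E0: "0 \<le> w'\<^sup>2/(1-w'\<^sup>2)" using assms(4,5) by (simp add: power_le_one)
  have p: "2*(314/100)/3 \<le> 2*pi/3" using pi by simp
  have A: "2*(314/100)/3 * (w'\<^sup>2/(1-w'\<^sup>2)) \<le> 2*pi/3 * (w\<^sup>2/(1-w\<^sup>2))"
    by (rule mult_mono[OF p E]) (use E0 in auto)
  have B: "0 \<le> 2*pi/3 * (w\<^sup>2/(1-w\<^sup>2))" using E E0 by (intro mult_nonneg_nonneg) auto
  show ?thesis unfolding w_def[symmetric]
    by (rule mult_mono[OF A q B assms(7)])
qed

lemma E_nonneg: assumes "1 < c" shows "0 \<le> Eterm c"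
proof -
  have "0 < Rminus c" "Rminus c < 1" using Rm_props Rm_less1 assms by auto
  hence "(Rminus c)\<^sup>2 < 1" by (simp add: power_less_one_iff)
  thus ?thesis using assms by simp
qed



lemma regimeA_cert: assumes "1 \<le> s" "s \<le> 123/100" shows "29/50 \<le> Rminus s"
proof -
  have "123/100 \<le> K (29/50)"
    by (rule K_ge_cert[where b="(63823/62500)"]) (simp_all add: power_divide)
  thus ?thesis using Rm_ge[of s "29/50"] assms by simp
qed

lemma caseB0: assumes "(123/100) \<le> c" "c \<le> (13/10)"
  shows "1 < Eterm c + Jterm c"
proof -
  have ku: "K (77/100) \<le> 1732/1000/2 * (123/100)"
    by (rule K_le_cert_lt1[where a="(506401/500000)"]) (simp_all add: power_divide)
  have kv: "K (5/4) \<le> 1732/1000/2 * (123/100)"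
    by (rule K_le_cert_gt1[where b="(31809/31250)"]) (simp_all add: power_divide)
  have J: "Jp (77/100) (5/4) \<le> Jterm c"
    by (rule J_part[OF assms(1) _ _ _ ku _ kv]) simp_all
  have kw: "(13/10) \<le> K (53/100)"
    by (rule K_ge_cert[where b="(1022977/1000000)"]) (simp_all add: power_divide)
  have E: "2*(314/100)/3 * ((53/100)\<^sup>2/(1-(53/100)\<^sup>2)) * (71/100) \<le> Eterm c"
    by (rule E_part[OF assms(1) assms(2) _ _ _ kw]) (simp_all add: power_divide)
  have N: "1 < 2*(314/100)/3 * ((53/100)\<^sup>2/(1-(53/100)\<^sup>2)) * (71/100) + Jp (77/100) (5/4)"
    by (simp add: Jp_def power_divide)
  show ?thesis using E J N by linarith
qed

lemma caseB1: assumes "(13/10) \<le> c" "c \<le> (7/5)"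
  shows "1 < Eterm c + Jterm c"
proof -
  have ku: "K (17/25) \<le> 1732/1000/2 * (13/10)"
    by (rule K_le_cert_lt1[where a="(1016941/1000000)"]) (simp_all add: power_divide)
  have kv: "K (27/20) \<le> 1732/1000/2 * (13/10)"
    by (rule K_le_cert_gt1[where b="(256591/250000)"]) (simp_all add: power_divide)
  have J: "Jp (17/25) (27/20) \<le> Jterm c"
    by (rule J_part[OF assms(1) _ _ _ ku _ kv]) simp_all
  have kw: "(7/5) \<le> K (12/25)"
    by (rule K_ge_cert[where b="(1024629/1000000)"]) (simp_all add: power_divide)
  have E: "2*(314/100)/3 * ((12/25)\<^sup>2/(1-(12/25)\<^sup>2)) * (83/100) \<le> Eterm c"
    by (rule E_part[OF assms(1) assms(2) _ _ _ kw]) (simp_all add: power_divide)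
  have N: "1 < 2*(314/100)/3 * ((12/25)\<^sup>2/(1-(12/25)\<^sup>2)) * (83/100) + Jp (17/25) (27/20)"
    by (simp add: Jp_def power_divide)
  show ?thesis using E J N by linarith
qed

lemma caseB2: assumes "(7/5) \<le> c" "c \<le> (31/20)"
  shows "1 < Eterm c + Jterm c"
proof -
  have ku: "K (3/5) \<le> 1732/1000/2 * (7/5)"
    by (rule K_le_cert_lt1[where a="(5101/5000)"]) (simp_all add: power_divide)
  have kv: "K (29/20) \<le> 1732/1000/2 * (7/5)"
    by (rule K_le_cert_gt1[where b="(1035641/1000000)"]) (simp_all add: power_divide)
  have J: "Jp (3/5) (29/20) \<le> Jterm c"
    by (rule J_part[OF assms(1) _ _ _ ku _ kv]) simp_all
  have kw: "(31/20) \<le> K (21/50)"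
    by (rule K_ge_cert[where b="(1283/1250)"]) (simp_all add: power_divide)
  have E: "2*(314/100)/3 * ((21/50)\<^sup>2/(1-(21/50)\<^sup>2)) * (97/100) \<le> Eterm c"
    by (rule E_part[OF assms(1) assms(2) _ _ _ kw]) (simp_all add: power_divide)
  have N: "1 < 2*(314/100)/3 * ((21/50)\<^sup>2/(1-(21/50)\<^sup>2)) * (97/100) + Jp (3/5) (29/20)"
    by (simp add: Jp_def power_divide)
  show ?thesis using E J N by linarith
qed

lemma caseB3: assumes "(31/20) \<le> c" "c \<le> (9/5)"
  shows "1 < Eterm c + Jterm c"
proof -
  have ku: "K (13/25) \<le> 1732/1000/2 * (31/20)"
    by (rule K_le_cert_lt1[where a="(1023059/1000000)"]) (simp_all add: power_divide)
  have kv: "K (39/25) \<le> 1732/1000/2 * (31/20)"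
    by (rule K_le_cert_gt1[where b="(130851/125000)"]) (simp_all add: power_divide)
  have J: "Jp (13/25) (39/25) \<le> Jterm c"
    by (rule J_part[OF assms(1) _ _ _ ku _ kv]) simp_all
  have kw: "(9/5) \<le> K (7/20)"
    by (rule K_ge_cert[where b="(514087/500000)"]) (simp_all add: power_divide)
  have E: "2*(314/100)/3 * ((7/20)\<^sup>2/(1-(7/20)\<^sup>2)) * (59/50) \<le> Eterm c"
    by (rule E_part[OF assms(1) assms(2) _ _ _ kw]) (simp_all add: power_divide)
  have N: "1 < 2*(314/100)/3 * ((7/20)\<^sup>2/(1-(7/20)\<^sup>2)) * (59/50) + Jp (13/25) (39/25)"
    by (simp add: Jp_def power_divide)
  show ?thesis using E J N by linarith
qed

lemma caseB4: assumes "(9/5) \<le> c" "c \<le> (2)"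
  shows "1 < Eterm c + Jterm c"
proof -
  have ku: "K (43/100) \<le> 1732/1000/2 * (9/5)"
    by (rule K_le_cert_lt1[where a="(256449/250000)"]) (simp_all add: power_divide)
  have kv: "K (17/10) \<le> 1732/1000/2 * (9/5)"
    by (rule K_le_cert_gt1[where b="(1062551/1000000)"]) (simp_all add: power_divide)
  have J: "Jp (43/100) (17/10) \<le> Jterm c"
    by (rule J_part[OF assms(1) _ _ _ ku _ kv]) simp_all
  have kw: "(2) \<le> K (31/100)"
    by (rule K_ge_cert[where b="(205809/200000)"]) (simp_all add: power_divide)
  have E: "2*(314/100)/3 * ((31/100)\<^sup>2/(1-(31/100)\<^sup>2)) * (149/100) \<le> Eterm c"
    by (rule E_part[OF assms(1) assms(2) _ _ _ kw]) (simp_all add: power_divide)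
  have N: "1 < 2*(314/100)/3 * ((31/100)\<^sup>2/(1-(31/100)\<^sup>2)) * (149/100) + Jp (43/100) (17/10)"
    by (simp add: Jp_def power_divide)
  show ?thesis using E J N by linarith
qed

lemma caseB5: assumes "(2) \<le> c" 
  shows "1 < Eterm c + Jterm c"
proof -
  have ku: "K (19/50) \<le> 1732/1000/2 * (2)"
    by (rule K_le_cert_lt1[where a="(513547/500000)"]) (simp_all add: power_divide)
  have kv: "K (89/50) \<le> 1732/1000/2 * (2)"
    by (rule K_le_cert_gt1[where b="(214471/200000)"]) (simp_all add: power_divide)
  have J: "Jp (19/50) (89/50) \<le> Jterm c"
    by (rule J_part[OF assms(1) _ _ _ ku _ kv]) simp_all
  have N: "1 < Jp (19/50) (89/50)" by (simp add: Jp_def power_divide)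
  have E: "0 \<le> Eterm c" using E_nonneg assms by simp
  show ?thesis using E J N by linarith
qed

lemma regimeB: assumes "123/100 \<le> c" shows "1 < Eterm c + Jterm c"
proof -
  have "c \<le> 13/10 \<or> (13/10 \<le> c \<and> c \<le> 14/10) \<or> (14/10 \<le> c \<and> c \<le> 155/100) \<or> (155/100 \<le> c \<and> c \<le> 18/10) \<or> (18/10 \<le> c \<and> c \<le> 2) \<or> 2 \<le> c" by linarith
  thus ?thesis using caseB0[of c] caseB1[of c] caseB2[of c] caseB3[of c] caseB4[of c] caseB5[of c] assms
    by auto
qed



definition f1 :: "real \<Rightarrow> real \<Rightarrow> real" where
  "f1 c \<psi> = 1 / (1 - (Rminus (c * sin \<psi>))\<^sup>2)"

lemma c_star_le: "c_star \<le> 123/100"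
proof -
  have "(2::real) \<le> 123/100 * (1732/1000)" by simp
  also have "\<dots> \<le> 123/100 * sqrt 3" using sqrt3_lb by (intro mult_left_mono) auto
  finally show ?thesis unfolding c_star_def by (simp add: divide_le_eq)
qed

lemma s_gt1:
  assumes "c \<ge> c_star" "pi/3 < \<psi>" "\<psi> < 2*pi/3"
  shows "1 < c * sin \<psi>"
proof -
  have "sqrt 3 / 2 < sin \<psi>" using sin_gt_sqrt3 assms by simp
  hence "c_star * (sqrt 3 / 2) < c_star * sin \<psi>" using c_star_gt1 by simp
  also have "\<dots> \<le> c * sin \<psi>"
  proof -
    have "0 < sqrt 3 / 2" by simp
    hence "0 \<le> sin \<psi>" using \<open>sqrt 3 / 2 < sin \<psi>\<close> by linarith
    thus ?thesis using assms(1) by (intro mult_right_mono) auto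
  qed
  finally show ?thesis using sqrt3_c_star by (simp add: mult.commute)
qed

lemma s_gt1':
  assumes "c > c_star" "pi/3 \<le> \<psi>" "\<psi> \<le> 2*pi/3"
  shows "1 < c * sin \<psi>"
proof -
  have s: "sqrt 3 / 2 \<le> sin \<psi>" using sin_ge_sqrt3 assms by simp
  have "0 < sqrt 3 / 2" by simp
  hence "sqrt 3 / 2 * c_star < sqrt 3 / 2 * c" using assms(1) by simp
  also have "\<dots> \<le> sin \<psi> * c" using s assms(1) c_star_gt1 by (intro mult_right_mono) auto
  finally show ?thesis using sqrt3_c_star by (simp add: mult.commute)
qed

lemma f1_isCont:
  assumes "1 < c * sin \<psi>"
  shows "isCont (f1 c) \<psi>"
proof -
  have "isCont (\<lambda>\<psi>. c * sin \<psi>) \<psi>" by (intro continuous_intros)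
  from isCont_o2[OF this Rm_isCont[OF assms]]
  have "isCont (\<lambda>\<psi>. Rminus (c * sin \<psi>)) \<psi>" .
  moreover have "(Rminus (c * sin \<psi>))\<^sup>2 < 1"
    using Rm_props[of "c * sin \<psi>"] Rm_less1[OF assms] assms by (simp add: power_less_one_iff)
  ultimately show ?thesis unfolding f1_def[abs_def]
    by (intro continuous_intros) auto
qed

lemma f1_int_gt:
  assumes "c > c_star"
  shows "f1 c integrable_on {pi/3..2*pi/3}"
proof -
  have "continuous_on {pi/3..2*pi/3} (f1 c)"
    using f1_isCont s_gt1' assms by (intro continuous_at_imp_continuous_on) auto
  thus ?thesis by (rule integrable_continuous_interval)
qed

lemma f1_lower_pt:
  assumes "c \<ge> c_star" "pi/3 < \<psi>" "\<psi> < 2*pi/3"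
  shows "1 / (1 - (Rminus c)\<^sup>2) \<le> f1 c \<psi>"
proof -
  define s where "s = c * sin \<psi>"
  have s1: "1 < s" using s_gt1 assms by (simp add: s_def)
  have sc: "s \<le> c"
  proof -
    have "c > 0" using assms c_star_gt1 by simp
    thus ?thesis unfolding s_def by (simp add: mult_left_le)
  qed
  have m: "Rminus c \<le> Rminus s" using Rm_mono[of s c] s1 sc by simp
  have p: "0 < Rminus c" using Rm_props s1 sc by simp
  have l: "Rminus s < 1" using Rm_less1 s1 by simp
  have "(Rminus c)\<^sup>2 \<le> (Rminus s)\<^sup>2" using m p by (intro power_mono) auto
  moreover have "(Rminus s)\<^sup>2 < 1" using l m p by (simp add: power_less_one_iff)
  ultimately show ?thesis unfolding f1_def s_def[symmetric]
    by (intro divide_left_mono) auto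
qed

lemma h1_lower:
  assumes "c \<ge> c_star" "f1 c integrable_on {pi/3..2*pi/3}"
  shows "pi/3 / (1 - (Rminus c)\<^sup>2) \<le> h1 c"
proof -
  define C where "C = 1 / (1 - (Rminus c)\<^sup>2)"
  have "((\<lambda>x. C) has_integral (2*pi/3 - pi/3) * C) {pi/3..2*pi/3}"
    using has_integral_const_real[of C "pi/3" "2*pi/3"] by simp
  hence ci: "((\<lambda>x. C) has_integral (pi/3) * C) {pi/3<..<2*pi/3}"
    by (simp add: has_integral_Icc_iff_Ioo)
  have fi: "f1 c integrable_on {pi/3<..<2*pi/3}"
    using assms(2) integrable_on_open_interval_real by blast
  have "(pi/3) * C \<le> integral {pi/3<..<2*pi/3} (f1 c)"
    using has_integral_le[OF ci integrable_integral[OF fi]] f1_lower_pt[OF assms(1)]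
    unfolding C_def by auto
  moreover have "h1 c = integral {pi/3<..<2*pi/3} (f1 c)"
    unfolding h1_def f1_def[abs_def] by (rule integral_open_interval_real)
  ultimately show ?thesis unfolding C_def by simp
qed



lemma O_leb: "{pi/3<..<2*pi/3} \<in> sets lebesgue"
  by simp

lemma Rm_gap:
  assumes "1 < s" "s \<le> 2" "1/3 \<le> (Rminus s)\<^sup>2"
  shows "(s - 1)/3 \<le> (1 - (Rminus s)\<^sup>2)\<^sup>2"
proof -
  define R where "R = Rminus s"
  define a where "a = R\<^sup>2"
  have R: "0 < R" "R < 1" "K R = s" using Rm_props[of s] Rm_less1[of s] assms by (auto simp: R_def)
  have a: "0 < a" "1/3 \<le> a" using R assms(3) by (auto simp: a_def R_def)
  have "ln s = ln (exp ((R\<^sup>2 - 1)/2) / R)" using R(3) unfolding K_def by simp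
  also have "\<dots> = (R\<^sup>2 - 1)/2 - ln R" using R(1) by (simp add: ln_div)
  finally have ls: "ln s = (R\<^sup>2 - 1)/2 - ln R" .
  have "ln a = ln R + ln R" unfolding a_def power2_eq_square using R(1) by (simp add: ln_mult)
  hence ls2: "2 * ln s = a - 1 - ln a" using ls unfolding a_def by simp
  have "ln (1/a) \<le> 1/a - 1" using a by (intro ln_le_minus_one) simp
  moreover have "ln (1/a) = - ln a" using a by (simp add: ln_div)
  ultimately have A: "2 * ln s \<le> a - 2 + 1/a" using ls2 by simp
  have "ln (1/s) \<le> 1/s - 1" using assms by (intro ln_le_minus_one) simp
  moreover have "ln (1/s) = - ln s" using assms by (simp add: ln_div)
  ultimately have B: "1 - 1/s \<le> ln s" by simp
  have B2: "2 * (1 - 1/s) \<le> 2 * ln s" using B by simp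
  have "2 * (1 - 1/s) \<le> a - 2 + 1/a" using B2 A by (rule order.trans)
  hence "a * (2 * (1 - 1/s)) \<le> a * (a - 2 + 1/a)" using a by (intro mult_left_mono) auto
  also have "\<dots> = (1 - a)\<^sup>2" using a by (simp add: field_simps power2_eq_square)
  finally have C: "a * (2 * (1 - 1/s)) \<le> (1 - a)\<^sup>2" .
  have "0 \<le> (s-1)*(2-s)" using assms by simp
  hence ss: "s * s + 2 \<le> s * 3" by (simp add: algebra_simps)
  have "(s - 1)/2 \<le> 1 - 1/s" using assms ss by (simp add: field_simps)
  hence h: "(s - 1)/2 \<le> 1 - 1/s" .
  have X: "(s - 1)/2 * (2 / 3) \<le> (1 - 1/s) * (2 * a)"
  proof (rule mult_mono)
    show "(s - 1)/2 \<le> 1 - 1/s" by (rule h)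
    show "2/3 \<le> 2 * a" using a by simp
    show "0 \<le> 1 - 1/s" using assms(1) by simp
    show "0 \<le> (2::real)/3" by simp
  qed
  have e1: "(s - 1)/2 * (2 / 3) = (s - 1)/3" by simp
  have e2: "(1 - 1/s) * (2 * a) = a * (2 * (1 - 1/s))" by (simp add: ac_simps)
  have "(s - 1)/3 \<le> a * (2 * (1 - 1/s))" using X unfolding e1 e2 .
  thus ?thesis using C unfolding a_def R_def by linarith
qed

lemma f1_bound_star:
  assumes "pi/3 < \<psi>" "\<psi> < 2*pi/3"
  shows "f1 c_star \<psi> \<le> sqrt 24 / sqrt ((\<psi> - pi/3) * (2*pi/3 - \<psi>))"
proof -
  define s where "s = c_star * sin \<psi>"
  define q where "q = (\<psi> - pi/3) * (2*pi/3 - \<psi>)"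
  define a where "a = (Rminus s)\<^sup>2"
  have q0: "0 < q" using assms by (simp add: q_def)
  have s1: "1 < s" using s_gt1[of c_star] assms by (simp add: s_def)
  have sc: "s \<le> c_star" unfolding s_def using c_star_gt1 by (simp add: mult_left_le)
  have s2: "s \<le> 2" using sc c_star_le by simp
  have R: "0 < Rminus s" "Rminus s < 1" using Rm_props[of s] Rm_less1[of s] s1 by auto
  have "29/50 \<le> Rminus s" using regimeA_cert[of s] s1 sc c_star_le by simp
  hence "(29/50)\<^sup>2 \<le> a" unfolding a_def by (intro power_mono) auto
  hence a3: "1/3 \<le> a" by (simp add: power_divide)
  have a1: "a < 1" using R unfolding a_def by (simp add: power_less_one_iff)
  have gap: "(s - 1)/3 \<le> (1 - a)\<^sup>2" using Rm_gap[OF s1 s2] a3 unfolding a_def by simp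
  have "sin \<psi> - sqrt 3/2 \<ge> q / 8" using sin_gap[of \<psi>] assms by (simp add: q_def)
  moreover have "s - 1 = c_star * (sin \<psi> - sqrt 3/2)"
    using sqrt3_c_star unfolding s_def by (simp add: algebra_simps)
  moreover have "c_star * (sin \<psi> - sqrt 3/2) \<ge> sin \<psi> - sqrt 3/2"
    using sin_gt_sqrt3[OF assms] c_star_gt1 by (simp add: mult_le_cancel_right1 less_imp_le)
  ultimately have "q/8 \<le> s - 1" by linarith
  hence "q/24 \<le> (1 - a)\<^sup>2" using gap by simp
  hence "sqrt (q/24) \<le> sqrt ((1 - a)\<^sup>2)" by (rule real_sqrt_le_mono)
  hence sq: "sqrt q / sqrt 24 \<le> 1 - a" using a1 by (simp add: real_sqrt_divide)
  have sqp: "0 < sqrt q / sqrt 24" using q0 by simp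
  have "1 / (1 - a) \<le> 1 / (sqrt q / sqrt 24)"
    using sq sqp a1 by (intro divide_left_mono mult_pos_pos) auto
  thus ?thesis unfolding f1_def q_def[symmetric] s_def[symmetric] a_def[symmetric] by simp
qed

lemma g_integrable:
  "(\<lambda>\<psi>. sqrt 24 / sqrt ((\<psi> - pi/3) * (2*pi/3 - \<psi>))) integrable_on {pi/3<..<2*pi/3}"
proof -
  define y where "y \<psi> = (\<psi> - pi/2) / (pi/6)" for \<psi>
  define G where "G \<psi> = sqrt 24 * arcsin (y \<psi>)" for \<psi>
  have "((\<lambda>\<psi>. sqrt 24 / sqrt ((\<psi> - pi/3) * (2*pi/3 - \<psi>))) has_integral (G (2*pi/3) - G (pi/3))) {pi/3..2*pi/3}"
  proof (rule fundamental_theorem_of_calculus_interior)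
    show "pi/3 \<le> 2*pi/3" by simp
    have "continuous_on {pi/3..2*pi/3} (\<lambda>\<psi>. arcsin (y \<psi>))"
      unfolding y_def by (intro continuous_on_arcsin continuous_intros) (auto simp: field_simps)
    thus "continuous_on {pi/3..2*pi/3} G" unfolding G_def by (rule continuous_on_mult_left)
    fix x assume x: "x \<in> {pi/3<..<2*pi/3}"
    have y1: "-1 < y x" "y x < 1" using x by (auto simp: y_def field_simps)
    have "(G has_real_derivative (sqrt 24 * (inverse (sqrt (1 - (y x)\<^sup>2)) * (1 / (pi/6))))) (at x)"
      unfolding G_def y_def using y1 unfolding y_def
      by (auto intro!: derivative_eq_intros DERIV_chain2[OF DERIV_arcsin])
    moreover have "sqrt 24 * (inverse (sqrt (1 - (y x)\<^sup>2)) * (1 / (pi/6)))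
        = sqrt 24 / sqrt ((x - pi/3) * (2*pi/3 - x))"
    proof -
      have "(x - pi/3) * (2*pi/3 - x) = (pi/6)\<^sup>2 * (1 - (y x)\<^sup>2)"
        unfolding y_def by (simp add: field_simps power2_eq_square)
      hence Qe: "sqrt ((x - pi/3) * (2*pi/3 - x)) = pi/6 * sqrt (1 - (y x)\<^sup>2)"
        by (simp add: real_sqrt_mult)
      moreover have "(y x)\<^sup>2 < 1" using y1 by (simp add: abs_square_less_1 abs_less_iff)
      hence P: "sqrt (1 - (y x)\<^sup>2) > 0" by simp
      show ?thesis unfolding Qe using P by (simp add: field_simps)
    qed
    ultimately show "(G has_vector_derivative sqrt 24 / sqrt ((x - pi/3) * (2*pi/3 - x))) (at x)"
      by (simp add: has_real_derivative_iff_has_vector_derivative[symmetric])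
  qed
  thus ?thesis using integrable_on_open_interval_real integrable_on_def by blast
qed



lemma f1_pos: assumes "1 < c * sin \<psi>" shows "0 < f1 c \<psi>"
proof -
  have "0 < Rminus (c * sin \<psi>)" "Rminus (c * sin \<psi>) < 1"
    using Rm_props Rm_less1 assms by auto
  hence "(Rminus (c * sin \<psi>))\<^sup>2 < 1" by (simp add: power_less_one_iff)
  thus ?thesis unfolding f1_def by simp
qed

lemma f1_int_star: "f1 c_star integrable_on {pi/3..2*pi/3}"
proof -
  have cont: "continuous_on {pi/3<..<2*pi/3} (f1 c_star)"
    using f1_isCont s_gt1[of c_star] by (intro continuous_at_imp_continuous_on) auto
  have meas: "f1 c_star \<in> borel_measurable (lebesgue_on {pi/3<..<2*pi/3})"
    by (rule continuous_imp_measurable_on_sets_lebesgue[OF cont O_leb])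
  have "f1 c_star integrable_on {pi/3<..<2*pi/3}"
  proof (rule measurable_bounded_by_integrable_imp_integrable[OF meas g_integrable _ O_leb])
    fix x assume x: "x \<in> {pi/3<..<2*pi/3}"
    have "0 < f1 c_star x" using f1_pos s_gt1[of c_star x] x by simp
    thus "norm (f1 c_star x) \<le> sqrt 24 / sqrt ((x - pi/3) * (2*pi/3 - x))"
      using f1_bound_star[of x] x by simp
  qed
  thus ?thesis using integrable_on_open_interval_real by blast
qed

lemma theta_le: assumes "1 < c" shows "arcsin (1/c) \<le> 1 / sqrt (c\<^sup>2 - 1)"
proof -
  have "0 < 1/c" using assms by simp
  have x1: "-1 < 1/c" using \<open>0 < 1/c\<close> by linarith
  have x2: "1/c < 1" using assms by simp
  note x = x1 x2
  have "sqrt (1 - (1/c)\<^sup>2) = sqrt (c\<^sup>2 - 1) / c"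
  proof -
    have "1 - (1/c)\<^sup>2 = (c\<^sup>2 - 1) / c\<^sup>2" using assms by (simp add: field_simps)
    thus ?thesis using assms by (simp add: real_sqrt_divide)
  qed
  hence "(1/c) / sqrt (1 - (1/c)\<^sup>2) = 1 / sqrt (c\<^sup>2 - 1)" using assms by simp
  hence "arcsin (1/c) = arctan (1 / sqrt (c\<^sup>2 - 1))" using arcsin_arctan[OF x] by simp
  moreover have "1 \<le> c\<^sup>2" using assms one_le_power[of c 2] by simp
  ultimately show ?thesis using arctan_le_self[of "1 / sqrt (c\<^sup>2 - 1)"] by simp
qed

lemma Jp_nonneg: assumes "0 \<le> u" "u \<le> 1" "1 \<le> v" shows "0 \<le> Jp u v"
proof -
  have "u^3 \<le> 1" using assms by (simp add: power_le_one)
  moreover have "1/v \<le> 1" using assms by simp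
  moreover have "1/v \<le> v" using assms by (smt (verit) divide_le_eq_1)
  ultimately show ?thesis unfolding Jp_def using assms by simp
qed

theorem mainTheorem12:
  fixes c :: real
  assumes "c \<ge> c_star"
  shows "2 * h1 c + h2 c > pi"
proof (cases "c = c_star")
  case True
  have h2: "h2 c = 0" unfolding h2_def True sqrt3_c_star Rm_one Rp_one by simp
  define w where "w = Rminus c_star"
  have "29/50 \<le> w" using regimeA_cert[of c_star] c_star_gt1 c_star_le by (simp add: w_def)
  hence "(29/50)\<^sup>2 \<le> w\<^sup>2" by (intro power_mono) auto
  hence w2: "841/2500 \<le> w\<^sup>2" by (simp add: power_divide)
  have "w < 1" using Rm_less1 c_star_gt1 by (simp add: w_def)
  have "pi/3 / (1 - w\<^sup>2) \<le> h1 c" using h1_lower[of c_star] f1_int_star True by (simp add: w_def)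
  moreover have "pi/3 / (1 - 841/2500) \<le> pi/3 / (1 - w\<^sup>2)"
    using w2 \<open>w < 1\<close> \<open>29/50 \<le> w\<close> by (intro divide_left_mono mult_pos_pos) (auto simp: power_less_one_iff)
  moreover have "pi/2 < pi/3 / (1 - 841/2500)" by simp
  ultimately show ?thesis using h2 by linarith
next
  case False
  hence c: "c > c_star" using assms by simp
  have c1: "c > 1" using c c_star_gt1 by simp
  define w where "w = Rminus c"
  define sq1 where "sq1 = sqrt (c\<^sup>2 - 1)"
  define J where "J = Jterm c"
  define th where "th = arcsin (1/c)"
  have sq1: "sq1 > 0" using c1 by (simp add: sq1_def)
  have w: "0 < w" "w < 1" using Rm_props Rm_less1 c1 by (auto simp: w_def)
  have w2: "w\<^sup>2 < 1" using w by (simp add: power_less_one_iff)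
  have H1: "pi/3 / (1 - w\<^sup>2) \<le> h1 c" using h1_lower f1_int_gt c assms by (simp add: w_def)
  have H2: "pi/3 - th + J / sq1 \<le> h2 c" using h2_lower[OF c] by (simp add: J_def th_def sq1_def)
  have split: "pi/3 / (1 - w\<^sup>2) = pi/3 + pi/3 * (w\<^sup>2 / (1 - w\<^sup>2))" using w2 by (simp add: field_simps)
  show ?thesis
  proof (cases "c \<le> 123/100")
    case True
    have "29/50 \<le> w" using regimeA_cert[of c] c1 True by (simp add: w_def)
    hence "(29/50)\<^sup>2 \<le> w\<^sup>2" by (intro power_mono) auto
    hence w3: "841/2500 \<le> w\<^sup>2" by (simp add: power_divide)
    have "(841/2500) / (1 - 841/2500) \<le> w\<^sup>2 / (1 - w\<^sup>2)"
      using w3 w2 by (intro frac_le) auto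
    hence E: "1/2 < w\<^sup>2 / (1 - w\<^sup>2)" by simp
    have th: "th \<le> pi/3"
    proof -
      have "1/c \<le> sqrt 3 / 2"
      proof -
        have "sqrt 3 / 2 * c_star \<le> sqrt 3 / 2 * c" using c by (intro mult_left_mono) auto
        hence "1 \<le> sqrt 3 / 2 * c" using sqrt3_c_star by linarith
        thus ?thesis using c1 by (simp add: field_simps)
      qed
      moreover have "-1 \<le> 1/c"
      proof -
        have "0 < 1/c" using c1 by simp
        thus ?thesis by linarith
      qed
      moreover have "sqrt 3 / 2 \<le> 1"
      proof -
        have "sqrt 3 < sqrt (2^2)" by (subst real_sqrt_less_iff) simp
        thus ?thesis by simp
      qed
      ultimately have "arcsin (1/c) \<le> arcsin (sqrt 3 / 2)"
        by (intro arcsin_le_arcsin) auto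
      thus ?thesis using arcsin_sqrt3_half by (simp add: th_def)
    qed
    have J: "0 \<le> J"
    proof -
      define S where "S = sqrt 3 / 2 * c"
      have "1 < S"
      proof -
        have "sqrt 3 / 2 * c_star < sqrt 3 / 2 * c" using c by (intro mult_strict_left_mono) auto
        hence "1 < sqrt 3 / 2 * c" using sqrt3_c_star by linarith
        thus ?thesis by (simp add: S_def)
      qed
      hence "0 \<le> Jp (Rminus S) (Rplus S)"
        using Rm_props[of S] Rp_props[of S] by (intro Jp_nonneg) auto
      thus ?thesis by (simp add: J_def S_def)
    qed
    have "pi/3 * (1/2) < pi/3 * (w\<^sup>2 / (1 - w\<^sup>2))" using E by (intro mult_strict_left_mono) auto
    moreover have "0 \<le> J / sq1" using J sq1 by simp
    ultimately show ?thesis using H1 H2 split th by linarith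
  next
    case False
    hence B: "1 < Eterm c + Jterm c" using regimeB by simp
    have "Eterm c = 2*pi/3 * (w\<^sup>2 / (1 - w\<^sup>2)) * sq1" by (simp add: w_def sq1_def)
    hence "1 < 2*pi/3 * (w\<^sup>2 / (1 - w\<^sup>2)) * sq1 + J" using B by (simp add: J_def)
    hence "1 / sq1 < (2*pi/3 * (w\<^sup>2 / (1 - w\<^sup>2)) * sq1 + J) / sq1"
      using sq1 by (intro divide_strict_right_mono) auto
    also have "\<dots> = 2*pi/3 * (w\<^sup>2 / (1 - w\<^sup>2)) + J / sq1" using sq1 by (simp add: field_simps)
    finally have X: "1 / sq1 < 2*pi/3 * (w\<^sup>2 / (1 - w\<^sup>2)) + J / sq1" .
    have T: "th \<le> 1 / sq1" using theta_le[OF c1] by (simp add: th_def sq1_def)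
    show ?thesis using H1 H2 split X T by linarith
  qed
qed

end
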